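(* For every $r\ge0$, every graph $G\in\mathcal{G}_{\Sigma,\Delta,\pi}$ and every $v\in V(G)$, we have $\omega_r(G^r_v)=\omega(G)^r_v$.
   Context: Fix an uncountably infinite set $\mathcal{V}$, sets $\Sigma,\Delta$, finite $\pi$. A graph $G$: countable $V(G)\subset\mathcal{V}$; a set $E(G)$ of pairwise disjoint two-element subsets of $V(G)\times\pi$ (write $u\!:\!i$ for $(u,i)$); partial labelings $\sigma(G):V(G)\rightharpoonup\Sigma$, $\delta(G):E(G)\rightharpoonup\Delta$; $\mathcal{G}_{\Sigma,\Delta,\pi}$ the set of graphs. $d_G$ shortest-path distance, $B_G(c,r)$ ball. Disk $G^r_c=(H,c)$: $V(H)=B_G(c,r+1)$, $E(H)$ the edges of $G$ with an endpoint in $B_G(c,r)$, $\sigma(H)=\sigma(G)|_{B_G(c,r)}$, $\delta(H)=\delta(G)|_{E(H)}$; $\mathcal{D}^r_{\Sigma,\Delta,\pi}$ the set of radius-$r$ disks. Let $\Sigma'=\Sigma\uplus\{\star\}$, $\Delta'=\Delta\uplus\{\star\}$, $\pi'=\pi\times\{0,1\}$. The encoding $\omega:\mathcal{G}_{\Sigma,\Delta,\pi}\to\mathcal{G}_{\Sigma',\Delta',\pi'}$: $V(\omega(G))=V(G)$; $\sigma(\omega(G))(u)=\sigma(G)(u)$ if defined, else $\star$; $E(\omega(G))=\{\{u\!:\!(i,0),\mathrm{trg}^\star_G(u\!:\!i)\}\mid u\in V(G),i\in\pi\}$ where $\mathrm{trg}^\star_G(u\!:\!i)=v\!:\!(j,0)$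 if $\{u\!:\!i,v\!:\!j\}\in E(G)$ and $\mathrm{trg}^\star_G(u\!:\!i)=u\!:\!(i,1)$ if $u\!:\!i$ lies in no edge of $G$ (a loopback edge); $\delta(\omega(G))(\{u\!:\!(i,0),v\!:\!(j,0)\})=\delta(G)(\{u\!:\!i,v\!:\!j\})$ if defined and $\star$ otherwise, and $\delta(\omega(G))(\{u\!:\!(i,0),u\!:\!(i,1)\})=\star$. For a radius-$r$ disk $(H,v)\in\mathcal{D}^r_{\Sigma,\Delta,\pi}$, $\omega_r((H,v)):=\omega(H)^r_v$. *)

theory Defs
  imports Main "HOL-Library.Countable_Set" "HOL-Library.Extended_Nat"
begin

text \<open>Graphs over vertex type 'v (the universe of vertex names), state labels 's,
  edge labels 'd and port set 'p. A vertex-port pair u:i is (u,i).\<close>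

record ('v,'s,'d,'p) graph =
  verts :: "'v set"
  edges :: "('v \<times> 'p) set set"
  vlab  :: "'v \<Rightarrow> 's option"
  elab  :: "('v \<times> 'p) set \<Rightarrow> 'd option"

definition is_graph :: "('v,'s,'d,'p) graph \<Rightarrow> bool" where
  "is_graph G \<longleftrightarrow>
     countable (verts G) \<and>
     (\<forall>e\<in>edges G. card e = 2 \<and> e \<subseteq> verts G \<times> UNIV) \<and>
     (\<forall>e\<in>edges G. \<forall>e'\<in>edges G. e \<noteq> e' \<longrightarrow> e \<inter> e' = {}) \<and>
     dom (vlab G) \<subseteq> verts G \<and>
     dom (elab G) \<subseteq> edges G"

definition adj :: "('v,'s,'d,'p) graph \<Rightarrow> ('v \<times> 'v) set" where
  "adj G = {(u,v). \<exists>i j. {(u,i),(v,j)} \<in> edges G}"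

definition gdist :: "('v,'s,'d,'p) graph \<Rightarrow> 'v \<Rightarrow> 'v \<Rightarrow> enat" where
  "gdist G u v = (INF n\<in>{n. (u,v) \<in> adj G ^^ n}. enat n)"

definition ball :: "('v,'s,'d,'p) graph \<Rightarrow> 'v \<Rightarrow> nat \<Rightarrow> 'v set" where
  "ball G c r = {u \<in> verts G. gdist G c u \<le> enat r}"

definition disk :: "('v,'s,'d,'p) graph \<Rightarrow> 'v \<Rightarrow> nat \<Rightarrow> ('v,'s,'d,'p) graph \<times> 'v" where
  "disk G c r =
    (let B = ball G c r;
         EH = {e \<in> edges G. \<exists>x\<in>e. fst x \<in> B}
     in (\<lparr> verts = ball G c (Suc r),
           edges = EH,
           vlab = restrict_map (vlab G) B,
           elab = restrict_map (elab G) EH \<rparr>, c))"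

text \<open>Sigma' = Sigma + {star}, Delta' = Delta + {star}.\<close>
datatype 'a starred = Lab 'a | Star

text \<open>trg*: the partner of u:i in G, encoded with port (j,0), or the loopback port (i,1).
  In pi' = pi x {0,1}, 0 is False and 1 is True.\<close>
definition trg :: "('v,'s,'d,'p) graph \<Rightarrow> 'v \<times> 'p \<Rightarrow> 'v \<times> ('p \<times> bool)" where
  "trg G x =
    (if \<exists>y. y \<noteq> x \<and> {x, y} \<in> edges G
     then (case (THE y. y \<noteq> x \<and> {x, y} \<in> edges G) of (v, j) \<Rightarrow> (v, (j, False)))
     else (fst x, (snd x, True)))"

definition strip :: "'v \<times> ('p \<times> bool) \<Rightarrow> 'v \<times> 'p" where
  "strip x = (fst x, fst (snd x))"

definition enc_edges :: "('v,'s,'d,'p) graph \<Rightarrow> ('v \<times> ('p \<times> bool)) set set" where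
  "enc_edges G = {{(u, (i, False)), trg G (u, i)} | u i. u \<in> verts G}"

definition omega :: "('v,'s,'d,'p) graph \<Rightarrow> ('v,'s starred,'d starred,'p \<times> bool) graph" where
  "omega G =
    \<lparr> verts = verts G,
      edges = enc_edges G,
      vlab = (\<lambda>u. if u \<in> verts G then
                     Some (case vlab G u of Some s \<Rightarrow> Lab s | None \<Rightarrow> Star)
                   else None),
      elab = (\<lambda>e. if e \<in> enc_edges G then
                     Some (if (\<forall>x\<in>e. snd (snd x) = False)
                           then (case elab G (strip ` e) of Some d \<Rightarrow> Lab d | None \<Rightarrow> Star)
                           else Star)
                   else None) \<rparr>"

definition omega_r :: "nat \<Rightarrow> ('v,'s,'d,'p) graph \<times> 'v \<Rightarrow> ('v,'s starred,'d starred,'p \<times> bool) graph \<times> 'v" where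
  "omega_r r D = disk (omega (fst D)) (snd D) r"

end

theory Submission
  imports Defs
begin

fun rch :: "('a \<times> 'a) set \<Rightarrow> 'a \<Rightarrow> nat \<Rightarrow> 'a set" where
  "rch R c 0 = {c}"
| "rch R c (Suc k) = rch R c k \<union> R `` rch R c k"

lemma rch_mono: "k \<le> m \<Longrightarrow> rch R c k \<subseteq> rch R c m"
  by (induction m) (auto simp: le_Suc_eq)

lemma rch_Id: "rch (R \<union> Id) c k = rch R c k"
  by (induction k) auto

lemma Image_cong_pt: "(\<And>x. x \<in> A \<Longrightarrow> R `` {x} = S `` {x}) \<Longrightarrow> R `` A = S `` A"
proof -
  assume h: "\<And>x. x \<in> A \<Longrightarrow> R `` {x} = S `` {x}"
  have "R `` A = (\<Union>x\<in>A. R `` {x})" "S `` A = (\<Union>x\<in>A. S `` {x})" by blast+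
  then show ?thesis using h by simp
qed

lemma rch_local:
  "(\<And>k' x. k' < k \<Longrightarrow> x \<in> rch R c k' \<Longrightarrow> R `` {x} = S `` {x}) \<Longrightarrow> rch R c k = rch S c k"
proof (induction k)
  case 0
  then show ?case by simp
next
  case (Suc k)
  have IH: "rch R c k = rch S c k"
    by (rule Suc.IH, rule Suc.prems) auto
  have "R `` rch R c k = S `` rch R c k"
    by (rule Image_cong_pt) (use Suc.prems in auto)
  then show ?case using IH by simp
qed

lemma rch_relpow: "u \<in> rch R c k \<longleftrightarrow> (\<exists>n\<le>k. (c,u) \<in> R ^^ n)"
proof (induction k arbitrary: u)
  case 0
  then show ?case by auto
next
  case (Suc k)
  show ?case
  proof
    assume "u \<in> rch R c (Suc k)"
    then consider "u \<in> rch R c k" | x where "x \<in> rch R c k" "(x,u) \<in> R" by auto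
    then show "\<exists>n\<le>Suc k. (c,u) \<in> R ^^ n"
    proof cases
      case 1
      then show ?thesis using Suc.IH le_SucI by blast
    next
      case 2
      then obtain n where "n \<le> k" "(c,x) \<in> R ^^ n" using Suc.IH by blast
      then have "(c,u) \<in> R ^^ Suc n" using 2 by auto
      then show ?thesis using \<open>n \<le> k\<close> by (intro exI[of _ "Suc n"]) auto
    qed
  next
    assume "\<exists>n\<le>Suc k. (c,u) \<in> R ^^ n"
    then obtain n where n: "n \<le> Suc k" "(c,u) \<in> R ^^ n" by blast
    show "u \<in> rch R c (Suc k)"
    proof (cases "n \<le> k")
      case True
      then show ?thesis using Suc.IH n by auto
    next
      case False
      then have "n = Suc k" using n by simp
      then obtain x where "(c,x) \<in> R ^^ k" "(x,u) \<in> R" using n by auto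
      then show ?thesis using Suc.IH by auto
    qed
  qed
qed

lemma gdist_le: "gdist G c u \<le> enat k \<longleftrightarrow> u \<in> rch (adj G) c k"
proof
  assume "gdist G c u \<le> enat k"
  then have "(INF n\<in>{n. (c,u) \<in> adj G ^^ n}. enat n) < enat (Suc k)"
    unfolding gdist_def using order_le_less_trans by fastforce
  then obtain n where "(c,u) \<in> adj G ^^ n" "enat n < enat (Suc k)"
    by (auto simp: INF_less_iff)
  then have "n \<le> k" "(c,u) \<in> adj G ^^ n" by auto
  then show "u \<in> rch (adj G) c k" unfolding rch_relpow by blast
next
  assume "u \<in> rch (adj G) c k"
  then obtain n where "n \<le> k" "(c,u) \<in> adj G ^^ n" by (auto simp: rch_relpow)
  then show "gdist G c u \<le> enat k" unfolding gdist_def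
    by (meson INF_lower2 enat_ord_simps(1) mem_Collect_eq)
qed

lemma ball_rch: "ball G c k = verts G \<inter> rch (adj G) c k"
  by (auto simp: ball_def gdist_le)

lemma adj_verts: "is_graph G \<Longrightarrow> (a,b) \<in> adj G \<Longrightarrow> a \<in> verts G \<and> b \<in> verts G"
proof -
  assume g: "is_graph G" and "(a,b) \<in> adj G"
  then obtain i j where e: "{(a,i),(b,j)} \<in> edges G" unfolding adj_def by blast
  have "\<forall>e\<in>edges G. e \<subseteq> verts G \<times> UNIV" using g unfolding is_graph_def by blast
  then have "{(a,i),(b,j)} \<subseteq> verts G \<times> UNIV" using e by blast
  then show ?thesis by blast
qed

lemma rch_verts: "is_graph G \<Longrightarrow> c \<in> verts G \<Longrightarrow> rch (adj G) c k \<subseteq> verts G"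
proof (induction k)
  case 0
  then show ?case by simp
next
  case (Suc k)
  then show ?case using adj_verts[of G] by auto
qed

lemma ball_rch': "is_graph G \<Longrightarrow> c \<in> verts G \<Longrightarrow> ball G c k = rch (adj G) c k"
  by (simp add: ball_rch Int_absorb1 rch_verts)

lemma trg_partner:
  assumes g: "is_graph G" and e: "{x,y} \<in> edges G"
  shows "trg G x = (fst y, (snd y, False))"
proof -
  have c2: "\<forall>e\<in>edges G. card e = 2" using g unfolding is_graph_def by simp
  have "card {x,y} = 2" using bspec[OF c2 e] .
  then have xy: "x \<noteq> y" by (cases "x = y") auto
  have dj: "\<forall>e\<in>edges G. \<forall>e'\<in>edges G. e \<noteq> e' \<longrightarrow> e \<inter> e' = {}"
    using g unfolding is_graph_def by simp
  have uniq: "y' = y" if "y' \<noteq> x" "{x,y'} \<in> edges G" for y'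
  proof -
    have "{x,y'} = {x,y}"
    proof (rule ccontr)
      assume ne: "{x,y'} \<noteq> {x,y}"
      have "{x,y'} \<inter> {x,y} = {}" using dj that(2) e ne by (meson bspec)
      then show False by simp
    qed
    then have "y' \<in> {x,y}" by blast
    then show ?thesis using that(1) by simp
  qed
  have ex: "\<exists>y'. y' \<noteq> x \<and> {x,y'} \<in> edges G" using xy e by (intro exI[of _ y]) auto
  have th: "(THE y'. y' \<noteq> x \<and> {x,y'} \<in> edges G) = y"
  proof (rule the_equality)
    show "y \<noteq> x \<and> {x, y} \<in> edges G" using xy e by simp
  next
    fix y' assume "y' \<noteq> x \<and> {x, y'} \<in> edges G"
    then show "y' = y" using uniq by simp
  qed
  have "trg G x = (case y of (v, j) \<Rightarrow> (v, (j, False)))"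
    unfolding trg_def using ex th by simp
  then show ?thesis by (cases y) simp
qed

lemma trg_loop:
  "\<not> (\<exists>y. y \<noteq> x \<and> {x,y} \<in> edges G) \<Longrightarrow> trg G x = (fst x, (snd x, True))"
  unfolding trg_def by auto

lemma edges_omega: "edges (omega X) = enc_edges X"
  by (simp add: omega_def)

lemma verts_omega: "verts (omega X) = verts X"
  by (simp add: omega_def)

lemma adj_omega:
  assumes g: "is_graph X"
  shows "adj (omega X) \<union> Id = adj X \<union> Id"
proof
  show "adj (omega X) \<union> Id \<subseteq> adj X \<union> Id"
  proof
    fix p assume "p \<in> adj (omega X) \<union> Id"
    then consider "p \<in> Id" | a b i j where "p = (a,b)" "{(a,i),(b,j)} \<in> enc_edges X"
      unfolding adj_def edges_omega by blast
    then show "p \<in> adj X \<union> Id"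
    proof cases
      case 1 then show ?thesis by simp
    next
      case 2
      then obtain u k where e: "{(a,i),(b,j)} = {(u,(k,False)), trg X (u,k)}"
        unfolding enc_edges_def by auto
      show ?thesis
      proof (cases "\<exists>y. y \<noteq> (u,k) \<and> {(u,k),y} \<in> edges X")
        case True
        then obtain y0 where y0: "{(u,k),y0} \<in> edges X" by blast
        obtain w q where "y0 = (w,q)" by (cases y0)
        then have y: "{(u,k),(w,q)} \<in> edges X" using y0 by simp
        have "trg X (u,k) = (w, (q, False))" using trg_partner[OF g y] by simp
        then have "{(a,i),(b,j)} = {(u,(k,False)), (w, (q, False))}" using e by simp
        then have "(a = u \<and> b = w) \<or> (a = w \<and> b = u)"
          unfolding doubleton_eq_iff by blast
        moreover have "{(w,q),(u,k)} \<in> edges X" using y by (simp add: insert_commute)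
        ultimately have "(a,b) \<in> adj X" using y unfolding adj_def by blast
        then show ?thesis using 2 by simp
      next
        case False
        have "trg X (u,k) = (fst (u,k), (snd (u,k), True))"
          by (rule trg_loop) (use False in blast)
        then have "trg X (u,k) = (u,(k,True))" by simp
        then have "a = u \<and> b = u" using e by (auto simp: doubleton_eq_iff)
        then show ?thesis using 2 by simp
      qed
    qed
  qed
next
  show "adj X \<union> Id \<subseteq> adj (omega X) \<union> Id"
  proof
    fix p assume "p \<in> adj X \<union> Id"
    then consider "p \<in> Id" | a b i j where "p = (a,b)" "{(a,i),(b,j)} \<in> edges X"
      unfolding adj_def by auto
    then show "p \<in> adj (omega X) \<union> Id"
    proof cases
      case 1 then show ?thesis by simp
    next
      case 2
      have "(a,b) \<in> adj X" using 2 unfolding adj_def by blast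
      then have a: "a \<in> verts X" using adj_verts[OF g] by blast
      have "trg X (a,i) = (b,(j,False))" using trg_partner[OF g 2(2)] by simp
      moreover have "{(a,(i,False)), trg X (a,i)} \<in> enc_edges X"
        unfolding enc_edges_def using a by blast
      ultimately have "{(a,(i,False)),(b,(j,False))} \<in> edges (omega X)"
        unfolding edges_omega by simp
      then have "(a,b) \<in> adj (omega X)" unfolding adj_def by blast
      then show ?thesis using 2 by simp
    qed
  qed
qed

lemma ball_omega: "is_graph X \<Longrightarrow> ball (omega X) c k = ball X c k"
proof -
  assume g: "is_graph X"
  have "rch (adj (omega X)) c k = rch (adj X) c k"
    by (metis adj_omega[OF g] rch_Id)
  then show ?thesis by (simp add: ball_rch verts_omega)
qed

lemma elab_omega: "elab (omega X) e = (if e \<in> enc_edges X then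
                     Some (if (\<forall>x\<in>e. snd (snd x) = False)
                           then (case elab X (strip ` e) of Some d \<Rightarrow> Lab d | None \<Rightarrow> Star)
                           else Star)
                   else None)"
  by (simp add: omega_def)

lemma vlab_omega: "vlab (omega X) u = (if u \<in> verts X then
                     Some (case vlab X u of Some s \<Rightarrow> Lab s | None \<Rightarrow> Star)
                   else None)"
  by (simp add: omega_def)

lemma edge_adj:
  assumes g: "is_graph G" and e: "e \<in> edges G" and x: "x \<in> e" and z: "z \<in> e" and xz: "x \<noteq> z"
  shows "(fst x, fst z) \<in> adj G"
proof -
  have "card e = 2" using g e unfolding is_graph_def by simp
  then obtain p q where pq: "e = {p,q}" "p \<noteq> q" by (auto simp: card_2_iff)
  then have "e = {x,z}" using x z xz by blast
  then have "{(fst x, snd x), (fst z, snd z)} \<in> edges G" using e by simp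
  then show ?thesis unfolding adj_def by blast
qed

theorem proposition3p1:
  fixes G :: "('v,'s,'d,'p::finite) graph" and v :: 'v and r :: nat
  assumes "\<not> countable (UNIV :: 'v set)"
    and "is_graph G"
    and "v \<in> verts G"
  shows "omega_r r (disk G v r) = disk (omega G) v r"
proof -
  have gG: "is_graph G" and vG: "v \<in> verts G" using assms by auto
  define B where "B k = rch (adj G) v k" for k
  have ballG: "ball G v k = B k" for k
    unfolding B_def using ball_rch'[OF gG vG] .
  have Bmono: "k \<le> m \<Longrightarrow> B k \<subseteq> B m" for k m
    unfolding B_def by (rule rch_mono)
  have BV: "B k \<subseteq> verts G" for k
    unfolding B_def by (rule rch_verts[OF gG vG])
  have Bstep: "y \<in> B (Suc k)" if "x \<in> B k" "(x,y) \<in> adj G" for x y k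
    using that unfolding B_def by auto
  have Br: "B r \<subseteq> B (Suc r)" by (rule Bmono) simp
  define EH where "EH = {e \<in> edges G. \<exists>x\<in>e. fst x \<in> B r}"
  define H :: "('v,'s,'d,'p) graph" where
    "H = \<lparr>verts = B (Suc r), edges = EH, vlab = vlab G |` B r, elab = elab G |` EH\<rparr>"
  have dG: "disk G v r = (H, v)"
    unfolding disk_def Let_def H_def EH_def ballG by simp
  have vH: "verts H = B (Suc r)" and eH: "edges H = EH" and vlH: "vlab H = vlab G |` B r"
    and elH: "elab H = elab G |` EH"
    unfolding H_def by simp_all
  have EHsub: "EH \<subseteq> edges G" unfolding EH_def by blast
  have EHend: "fst z \<in> B (Suc r)" if eEH: "e \<in> EH" and zin: "z \<in> e" for e z
  proof -
    obtain x where x: "e \<in> edges G" "x \<in> e" "fst x \<in> B r" using eEH unfolding EH_def by blast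
    show ?thesis
    proof (cases "x = z")
      case True
      then show ?thesis using x Br by blast
    next
      case False
      then have "(fst x, fst z) \<in> adj G" using edge_adj[OF gG x(1) x(2) zin] by simp
      then show ?thesis using Bstep x(3) by blast
    qed
  qed
  have gH: "is_graph H"
  proof -
    have "countable (verts G)" using gG unfolding is_graph_def by simp
    then have c: "countable (B (Suc r))" using BV countable_subset by blast
    have e1: "\<forall>e\<in>EH. card e = 2 \<and> e \<subseteq> B (Suc r) \<times> UNIV"
    proof
      fix e assume e: "e \<in> EH"
      have c2: "\<forall>e\<in>edges G. card e = 2" using gG unfolding is_graph_def by simp
      have "e \<in> edges G" using e EHsub by blast
      then have "card e = 2" using c2 by simp
      moreover have "e \<subseteq> B (Suc r) \<times> UNIV"
      proof
        fix z assume "z \<in> e"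
        then have "fst z \<in> B (Suc r)" using EHend e by blast
        then show "z \<in> B (Suc r) \<times> UNIV" by (cases z) simp
      qed
      ultimately show "card e = 2 \<and> e \<subseteq> B (Suc r) \<times> UNIV" by simp
    qed
    have dj: "\<forall>e\<in>edges G. \<forall>e'\<in>edges G. e \<noteq> e' \<longrightarrow> e \<inter> e' = {}"
      using gG unfolding is_graph_def by simp
    then have e2: "\<forall>e\<in>EH. \<forall>e'\<in>EH. e \<noteq> e' \<longrightarrow> e \<inter> e' = {}"
      using EHsub by blast
    have e3: "dom (vlab G |` B r) \<subseteq> B (Suc r)" using Br by auto
    have e4: "dom (elab G |` EH) \<subseteq> EH" by auto
    show ?thesis unfolding is_graph_def vH eH vlH elH using c e1 e2 e3 e4 by blast
  qed
  have adjsub: "adj H \<subseteq> adj G" unfolding adj_def eH using EHsub by blast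
  have adjloc: "adj G `` {x} = adj H `` {x}" if x: "x \<in> B r" for x
  proof
    show "adj H `` {x} \<subseteq> adj G `` {x}" using adjsub by blast
  next
    show "adj G `` {x} \<subseteq> adj H `` {x}"
    proof
      fix y assume "y \<in> adj G `` {x}"
      then obtain i j where e: "{(x,i),(y,j)} \<in> edges G" unfolding adj_def by blast
      then have "{(x,i),(y,j)} \<in> EH" unfolding EH_def using x by auto
      then show "y \<in> adj H `` {x}" unfolding adj_def eH by blast
    qed
  qed
  have rchH: "rch (adj H) v k = B k" if k: "k \<le> Suc r" for k
  proof -
    have "rch (adj G) v k = rch (adj H) v k"
    proof (rule rch_local)
      fix k' x assume "k' < k" "x \<in> rch (adj G) v k'"
      then have "x \<in> B r" using Bmono[of k' r] k unfolding B_def by auto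
      then show "adj G `` {x} = adj H `` {x}" by (rule adjloc)
    qed
    then show ?thesis unfolding B_def by simp
  qed
  have ballH: "ball H v k = B k" if k: "k \<le> Suc r" for k
    unfolding ball_rch vH rchH[OF k] using Bmono[OF k] by blast
  have ballOH: "ball (omega H) v k = B k" if k: "k \<le> Suc r" for k
    using ball_omega[OF gH] ballH[OF k] by simp
  have ballOG: "ball (omega G) v k = B k" for k
    using ball_omega[OF gG] ballG by simp
  have trgeq: "trg H (u,i) = trg G (u,i)"
    if "(\<exists>y. {(u,i),y} \<in> edges H) \<or> u \<in> B r" for u i
  proof (cases "\<exists>y. {(u,i),y} \<in> edges H")
    case True
    then obtain y where y: "{(u,i),y} \<in> edges H" by blast
    then have y': "{(u,i),y} \<in> edges G" using EHsub eH by blast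
    show ?thesis using trg_partner[OF gH y] trg_partner[OF gG y'] by simp
  next
    case False
    then have u: "u \<in> B r" using that by blast
    have nG: "\<not> (\<exists>y. y \<noteq> (u,i) \<and> {(u,i),y} \<in> edges G)"
    proof
      assume "\<exists>y. y \<noteq> (u,i) \<and> {(u,i),y} \<in> edges G"
      then obtain y where "{(u,i),y} \<in> edges G" by blast
      then have "{(u,i),y} \<in> edges H" unfolding eH EH_def using u by auto
      then show False using False by blast
    qed
    have nH: "\<not> (\<exists>y. y \<noteq> (u,i) \<and> {(u,i),y} \<in> edges H)" using False by blast
    show ?thesis using trg_loop[OF nG] trg_loop[OF nH] by simp
  qed
  define E2 where "E2 = {e \<in> enc_edges G. \<exists>x\<in>e. fst x \<in> B r}"
  have encE: "\<exists>u i. e = {(u,(i,False)), trg X (u,i)} \<and> u \<in> verts X"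
    if "e \<in> enc_edges X" for e and X :: "('v,'s,'d,'p) graph"
    using that unfolding enc_edges_def by blast
  have encI: "{(u,(i,False)), trg X (u,i)} \<in> enc_edges X"
    if "u \<in> verts X" for u i and X :: "('v,'s,'d,'p) graph"
    using that unfolding enc_edges_def by blast
  have EE: "{e \<in> enc_edges H. \<exists>x\<in>e. fst x \<in> B r} = E2"
  proof
    show "{e \<in> enc_edges H. \<exists>x\<in>e. fst x \<in> B r} \<subseteq> E2"
    proof
      fix e assume "e \<in> {e \<in> enc_edges H. \<exists>x\<in>e. fst x \<in> B r}"
      then have e1: "e \<in> enc_edges H" and "\<exists>x\<in>e. fst x \<in> B r" by simp_all
      then obtain x where x: "x \<in> e" "fst x \<in> B r" by blast
      obtain u i where e: "e = {(u,(i,False)), trg H (u,i)}" "u \<in> verts H"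
        using encE[OF e1] by blast
      have uG: "u \<in> verts G" using e(2) vH BV by blast
      have "trg H (u,i) = trg G (u,i)"
      proof (cases "\<exists>y. {(u,i),y} \<in> edges H")
        case True
        then show ?thesis using trgeq[of u i] by simp
      next
        case False
        have "trg H (u,i) = (fst (u,i), (snd (u,i), True))"
          by (rule trg_loop) (use False in blast)
        then have "trg H (u,i) = (u,(i,True))" by simp
        then have "x = (u,(i,False)) \<or> x = (u,(i,True))" using x(1) e(1) by simp
        then have "fst x = u" by auto
        then have "u \<in> B r" using x(2) by simp
        then show ?thesis using trgeq[of u i] by simp
      qed
      then have "e = {(u,(i,False)), trg G (u,i)}" using e(1) by simp
      then have "e \<in> enc_edges G" using encI[OF uG, of i] by simp
      then show "e \<in> E2" unfolding E2_def using x by blast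
    qed
  next
    show "E2 \<subseteq> {e \<in> enc_edges H. \<exists>x\<in>e. fst x \<in> B r}"
    proof
      fix e assume "e \<in> E2"
      then have e1: "e \<in> enc_edges G" and "\<exists>x\<in>e. fst x \<in> B r" unfolding E2_def by simp_all
      then obtain x where x: "x \<in> e" "fst x \<in> B r" by blast
      obtain u i where e: "e = {(u,(i,False)), trg G (u,i)}" "u \<in> verts G"
        using encE[OF e1] by blast
      have "u \<in> verts H \<and> trg H (u,i) = trg G (u,i)"
      proof (cases "\<exists>y. y \<noteq> (u,i) \<and> {(u,i),y} \<in> edges G")
        case True
        then obtain y0 where y0: "{(u,i),y0} \<in> edges G" by blast
        obtain w q where wq: "y0 = (w,q)" by (cases y0)
        then have y: "{(u,i),(w,q)} \<in> edges G" using y0 by simp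
        have "trg G (u,i) = (w,(q,False))" using trg_partner[OF gG y] by simp
        then have "x = (u,(i,False)) \<or> x = (w,(q,False))" using x(1) e(1) by simp
        then have "fst x = u \<or> fst x = w" by auto
        then have "(u,i) \<in> {(u,i),(w,q)} \<and> fst (u,i) \<in> B r \<or>
                   (w,q) \<in> {(u,i),(w,q)} \<and> fst (w,q) \<in> B r" using x(2) by auto
        then have "{(u,i),(w,q)} \<in> EH" unfolding EH_def using y by blast
        then have yH: "{(u,i),(w,q)} \<in> edges H" using eH by simp
        have "(u,w) \<in> adj H" using yH unfolding adj_def by blast
        then have "u \<in> verts H" using adj_verts[OF gH] by blast
        moreover have "trg H (u,i) = trg G (u,i)" using trgeq[of u i] yH by blast
        ultimately show ?thesis by simp
      next
        case False
        have "trg G (u,i) = (fst (u,i), (snd (u,i), True))"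
          by (rule trg_loop) (use False in blast)
        then have "trg G (u,i) = (u,(i,True))" by simp
        then have "x = (u,(i,False)) \<or> x = (u,(i,True))" using x(1) e(1) by simp
        then have "fst x = u" by auto
        then have u: "u \<in> B r" using x(2) by simp
        then have "u \<in> verts H" using Br vH by blast
        moreover have "trg H (u,i) = trg G (u,i)" using trgeq[of u i] u by simp
        ultimately show ?thesis by simp
      qed
      then have uH: "u \<in> verts H" and tq: "trg H (u,i) = trg G (u,i)" by simp_all
      have "e = {(u,(i,False)), trg H (u,i)}" using e(1) tq by simp
      then have "e \<in> enc_edges H" using encI[OF uH, of i] by simp
      then show "e \<in> {e \<in> enc_edges H. \<exists>x\<in>e. fst x \<in> B r}" using x by blast
    qed
  qed
  have VV: "vlab (omega H) |` B r = vlab (omega G) |` B r"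
  proof
    fix u
    show "(vlab (omega H) |` B r) u = (vlab (omega G) |` B r) u"
    proof (cases "u \<in> B r")
      case True
      then have "u \<in> verts H" "u \<in> verts G" "vlab H u = vlab G u"
        using Br vH BV vlH by auto
      then show ?thesis using True by (simp add: vlab_omega)
    next
      case False
      then show ?thesis by simp
    qed
  qed
  have LL: "elab (omega H) |` E2 = elab (omega G) |` E2"
  proof
    fix e
    show "(elab (omega H) |` E2) e = (elab (omega G) |` E2) e"
    proof (cases "e \<in> E2")
      case False
      then show ?thesis by simp
    next
      case True
      have eH': "e \<in> enc_edges H" using True EE by blast
      have eG: "e \<in> enc_edges G" using True unfolding E2_def by blast
      have lab: "elab H (strip ` e) = elab G (strip ` e)" if allF: "\<forall>x\<in>e. snd (snd x) = False"
      proof -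
        obtain x u i where e: "e = {(u,(i,False)), trg G (u,i)}" "u \<in> verts G"
          and x: "x \<in> e" "fst x \<in> B r"
          using True unfolding enc_edges_def E2_def by blast
        have "strip ` e \<in> EH"
        proof (cases "\<exists>y. y \<noteq> (u,i) \<and> {(u,i),y} \<in> edges G")
          case True
          then obtain y0 where y0: "{(u,i),y0} \<in> edges G" by blast
          obtain w q where wq: "y0 = (w,q)" by (cases y0)
          then have y: "{(u,i),(w,q)} \<in> edges G" using y0 by simp
          have "trg G (u,i) = (w,(q,False))" using trg_partner[OF gG y] by simp
          then have ee: "e = {(u,(i,False)), (w,(q,False))}" using e(1) by simp
          then have "fst x = u \<or> fst x = w" using x(1) by auto
          moreover have "strip ` e = {(u,i),(w,q)}" using ee by (simp add: strip_def)
          ultimately show ?thesis unfolding EH_def using y x(2) by auto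
        next
          case False
          have "trg G (u,i) = (fst (u,i), (snd (u,i), True))"
            by (rule trg_loop) (use False in blast)
          then have "(u,(i,True)) \<in> e" using e(1) by simp
          then show ?thesis using allF by fastforce
        qed
        then show ?thesis using elH by simp
      qed
      show ?thesis
      proof (cases "\<forall>x\<in>e. snd (snd x) = False")
        case True
        then show ?thesis using lab eH' eG \<open>e \<in> E2\<close> by (simp add: elab_omega)
      next
        case False
        then have c: "(\<forall>x\<in>e. snd (snd x) = False) = False" by simp
        have "elab (omega H) e = elab (omega G) e"
          unfolding elab_omega using eH' eG by (simp only: c if_True if_False)
        then show ?thesis using \<open>e \<in> E2\<close> by simp
      qed
    qed
  qed
  have "omega_r r (disk G v r) = disk (omega H) v r"
    unfolding omega_r_def dG by simp
  also have "\<dots> = disk (omega G) v r"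
    unfolding disk_def Let_def ballOH[of r, simplified] ballOH[of "Suc r", simplified] ballOG
      edges_omega EE
    unfolding E2_def[symmetric] VV LL ..
  finally show ?thesis .
qed

end
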